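(* For every integer $n\geq 1$, $$c_n(231,1432 : 231)=c_n(312,3214 : 312)=L_{n+1}-\left\lceil \tfrac{n}{2}\right\rceil-1,$$ where $L_m$ is the $m$-th Lucas number ($L_0=2$, $L_1=1$, $L_m=L_{m-1}+L_{m-2}$ for $m\ge 2$).
   Context: $S_n$ is the symmetric group on $[n]=\{1,\dots,n\}$, and a permutation $\pi\in S_n$ is written in one-line notation $\pi=\pi_1\pi_2\cdots\pi_n$ with $\pi_i=\pi(i)$. For $\tau\in S_k$, $k\le n$, $\pi$ contains $\tau$ if there are indices $i_1<\dots<i_k$ with $\pi_{i_s}>\pi_{i_t}$ iff $\tau_s>\tau_t$ for all $1\le s<t\le k$; otherwise $\pi$ avoids $\tau$. $\pi^2$ denotes the composition $\pi\circ\pi$. For patterns $\sigma_1,\sigma_2,\rho$, $c_n(\sigma_1,\sigma_2 : \rho)$ denotes the number of permutations $\pi\in S_n$ such that $\pi$ avoids both $\sigma_1$ and $\sigma_2$ and $\pi^2$ avoids $\rho$. *)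

theory Defs
  imports Complex_Main "HOL-Combinatorics.Permutations"
begin

text \<open>Permutations of [n] = {1..n} are functions nat => nat with p permutes {1..n};
  one-line notation pi_i = p i. A pattern tau in S_k is given as a list
  [tau_1, ..., tau_k] (tau_s = tau ! (s - 1)).\<close>

definition contains :: "(nat \<Rightarrow> nat) \<Rightarrow> nat \<Rightarrow> nat list \<Rightarrow> bool" where
  "contains p n tau \<longleftrightarrow>
     (\<exists>i :: nat \<Rightarrow> nat. strict_mono_on {1..length tau} i \<and> i ` {1..length tau} \<subseteq> {1..n} \<and>
        (\<forall>s\<in>{1..length tau}. \<forall>t\<in>{1..length tau}. s < t \<longrightarrow>
           (p (i s) > p (i t) \<longleftrightarrow> tau ! (s - 1) > tau ! (t - 1))))"

definition avoids :: "(nat \<Rightarrow> nat) \<Rightarrow> nat \<Rightarrow> nat list \<Rightarrow> bool" where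
  "avoids p n tau \<longleftrightarrow> \<not> contains p n tau"

definition c_count :: "nat \<Rightarrow> nat list \<Rightarrow> nat list \<Rightarrow> nat list \<Rightarrow> nat" where
  "c_count n s1 s2 rho = card {p. p permutes {1..n} \<and> avoids p n s1 \<and> avoids p n s2
                                  \<and> avoids (p \<circ> p) n rho}"

fun lucas :: "nat \<Rightarrow> nat" where
  "lucas 0 = 2"
| "lucas (Suc 0) = 1"
| "lucas (Suc (Suc m)) = lucas (Suc m) + lucas m"

end

theory Submission
  imports Defs
begin

lemma contains3:
  "contains p n [x1,x2,x3] \<longleftrightarrow> (\<exists>a b c. 1 \<le> a \<and> a < b \<and> b < c \<and> c \<le> n \<and>
     (p a > p b \<longleftrightarrow> x1 > x2) \<and> (p a > p c \<longleftrightarrow> x1 > x3) \<and> (p b > p c \<longleftrightarrow> x2 > x3))"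
proof
  assume H: "contains p n [x1,x2,x3]"
  have L: "length [x1,x2,x3] = 3" by simp
  from H obtain i where m: "strict_mono_on {1..3} i" and r: "i ` {1..3} \<subseteq> {1..n}"
    and o: "\<forall>s\<in>{1..3}. \<forall>t\<in>{1..3}. s < t \<longrightarrow> (p (i s) > p (i t) \<longleftrightarrow> [x1,x2,x3] ! (s - 1) > [x1,x2,x3] ! (t - 1))"
    unfolding contains_def L by blast
  have "i 1 < i 2" "i 2 < i 3" using m by (auto simp: strict_mono_on_def)
  moreover have "1 \<le> i 1" "i 3 \<le> n" using r by (auto simp: image_subset_iff)
  moreover have "(p (i 1) > p (i 2) \<longleftrightarrow> x1 > x2)" "(p (i 1) > p (i 3) \<longleftrightarrow> x1 > x3)" "(p (i 2) > p (i 3) \<longleftrightarrow> x2 > x3)"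
    using o[rule_format, of 1 2] o[rule_format, of 1 3] o[rule_format, of 2 3] by auto
  ultimately show "\<exists>a b c. 1 \<le> a \<and> a < b \<and> b < c \<and> c \<le> n \<and>
     (p a > p b \<longleftrightarrow> x1 > x2) \<and> (p a > p c \<longleftrightarrow> x1 > x3) \<and> (p b > p c \<longleftrightarrow> x2 > x3)" by blast
next
  assume "\<exists>a b c. 1 \<le> a \<and> a < b \<and> b < c \<and> c \<le> n \<and>
     (p a > p b \<longleftrightarrow> x1 > x2) \<and> (p a > p c \<longleftrightarrow> x1 > x3) \<and> (p b > p c \<longleftrightarrow> x2 > x3)"
  then obtain a b c where h: "1 \<le> a" "a < b" "b < c" "c \<le> n" "(p a > p b \<longleftrightarrow> x1 > x2)" "(p a > p c \<longleftrightarrow> x1 > x3)" "(p b > p c \<longleftrightarrow> x2 > x3)"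
    by blast
  define i where "i = (\<lambda>s::nat. if s = 1 then a else if s = 2 then b else c)"
  have e: "{1..3::nat} = {1,2,3}" by auto
  show "contains p n [x1,x2,x3]"
    unfolding contains_def
    apply (rule exI[of _ i])
    using h by (auto simp: e i_def strict_mono_on_def)
qed

lemma contains4:
  "contains p n [x1,x2,x3,x4] \<longleftrightarrow> (\<exists>a b c d. 1 \<le> a \<and> a < b \<and> b < c \<and> c < d \<and> d \<le> n \<and>
     (p a > p b \<longleftrightarrow> x1 > x2) \<and> (p a > p c \<longleftrightarrow> x1 > x3) \<and> (p a > p d \<longleftrightarrow> x1 > x4) \<and>
     (p b > p c \<longleftrightarrow> x2 > x3) \<and> (p b > p d \<longleftrightarrow> x2 > x4) \<and> (p c > p d \<longleftrightarrow> x3 > x4))"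
proof
  assume H: "contains p n [x1,x2,x3,x4]"
  have L: "length [x1,x2,x3,x4] = 4" by simp
  from H obtain i where m: "strict_mono_on {1..4} i" and r: "i ` {1..4} \<subseteq> {1..n}"
    and o: "\<forall>s\<in>{1..4}. \<forall>t\<in>{1..4}. s < t \<longrightarrow> (p (i s) > p (i t) \<longleftrightarrow> [x1,x2,x3,x4] ! (s - 1) > [x1,x2,x3,x4] ! (t - 1))"
    unfolding contains_def L by blast
  have "i 1 < i 2" "i 2 < i 3" "i 3 < i 4" using m by (auto simp: strict_mono_on_def)
  moreover have "1 \<le> i 1" "i 4 \<le> n" using r by (auto simp: image_subset_iff)
  moreover have "(p (i 1) > p (i 2) \<longleftrightarrow> x1 > x2)" "(p (i 1) > p (i 3) \<longleftrightarrow> x1 > x3)" "(p (i 1) > p (i 4) \<longleftrightarrow> x1 > x4)"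
    "(p (i 2) > p (i 3) \<longleftrightarrow> x2 > x3)" "(p (i 2) > p (i 4) \<longleftrightarrow> x2 > x4)" "(p (i 3) > p (i 4) \<longleftrightarrow> x3 > x4)"
    using o[rule_format, of 1 2] o[rule_format, of 1 3] o[rule_format, of 1 4]
      o[rule_format, of 2 3] o[rule_format, of 2 4] o[rule_format, of 3 4] by auto
  ultimately show "\<exists>a b c d. 1 \<le> a \<and> a < b \<and> b < c \<and> c < d \<and> d \<le> n \<and>
     (p a > p b \<longleftrightarrow> x1 > x2) \<and> (p a > p c \<longleftrightarrow> x1 > x3) \<and> (p a > p d \<longleftrightarrow> x1 > x4) \<and>
     (p b > p c \<longleftrightarrow> x2 > x3) \<and> (p b > p d \<longleftrightarrow> x2 > x4) \<and> (p c > p d \<longleftrightarrow> x3 > x4)" by blast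
next
  assume "\<exists>a b c d. 1 \<le> a \<and> a < b \<and> b < c \<and> c < d \<and> d \<le> n \<and>
     (p a > p b \<longleftrightarrow> x1 > x2) \<and> (p a > p c \<longleftrightarrow> x1 > x3) \<and> (p a > p d \<longleftrightarrow> x1 > x4) \<and>
     (p b > p c \<longleftrightarrow> x2 > x3) \<and> (p b > p d \<longleftrightarrow> x2 > x4) \<and> (p c > p d \<longleftrightarrow> x3 > x4)"
  then obtain a b c d where h: "1 \<le> a" "a < b" "b < c" "c < d" "d \<le> n" "(p a > p b \<longleftrightarrow> x1 > x2)" "(p a > p c \<longleftrightarrow> x1 > x3)" "(p a > p d \<longleftrightarrow> x1 > x4)"
     "(p b > p c \<longleftrightarrow> x2 > x3)" "(p b > p d \<longleftrightarrow> x2 > x4)" "(p c > p d \<longleftrightarrow> x3 > x4)"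
    by blast
  define i where "i = (\<lambda>s::nat. if s = 1 then a else if s = 2 then b else if s = 3 then c else d)"
  have e: "{1..4::nat} = {1,2,3,4}" by auto
  show "contains p n [x1,x2,x3,x4]"
    unfolding contains_def
    apply (rule exI[of _ i])
    using h by (auto simp: e i_def strict_mono_on_def)
qed


definition av231 :: "(nat \<Rightarrow> nat) \<Rightarrow> nat \<Rightarrow> bool" where
  "av231 p n \<longleftrightarrow> (\<forall>a b c. 1 \<le> a \<longrightarrow> a < b \<longrightarrow> b < c \<longrightarrow> c \<le> n \<longrightarrow> \<not> (p c < p a \<and> p a < p b))"
definition av312 :: "(nat \<Rightarrow> nat) \<Rightarrow> nat \<Rightarrow> bool" where
  "av312 p n \<longleftrightarrow> (\<forall>a b c. 1 \<le> a \<longrightarrow> a < b \<longrightarrow> b < c \<longrightarrow> c \<le> n \<longrightarrow> \<not> (p b < p c \<and> p c < p a))"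
definition av1432 :: "(nat \<Rightarrow> nat) \<Rightarrow> nat \<Rightarrow> bool" where
  "av1432 p n \<longleftrightarrow> (\<forall>a b c d. 1 \<le> a \<longrightarrow> a < b \<longrightarrow> b < c \<longrightarrow> c < d \<longrightarrow> d \<le> n \<longrightarrow> \<not> (p a < p d \<and> p d < p c \<and> p c < p b))"
definition av3214 :: "(nat \<Rightarrow> nat) \<Rightarrow> nat \<Rightarrow> bool" where
  "av3214 p n \<longleftrightarrow> (\<forall>a b c d. 1 \<le> a \<longrightarrow> a < b \<longrightarrow> b < c \<longrightarrow> c < d \<longrightarrow> d \<le> n \<longrightarrow> \<not> (p c < p b \<and> p b < p a \<and> p a < p d))"

lemma injD': "inj_on p {1..n} \<Longrightarrow> 1 \<le> x \<Longrightarrow> x \<le> n \<Longrightarrow> 1 \<le> y \<Longrightarrow> y \<le> n \<Longrightarrow> x \<noteq> y \<Longrightarrow> p x \<noteq> p y"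
  by (auto simp: inj_on_def)

lemma avoids231: assumes "inj_on p {1..n}" shows "avoids p n [2,3,1] \<longleftrightarrow> av231 p n"
  unfolding avoids_def contains3 av231_def
proof (intro iffI allI impI notI)
  fix a b c assume "\<not> (\<exists>a b c. 1 \<le> a \<and> a < b \<and> b < c \<and> c \<le> n \<and> (p b < p a) = ((3::nat) < 2) \<and> (p c < p a) = ((1::nat) < 2) \<and> (p c < p b) = ((1::nat) < 3))"
    "1 \<le> a" "a < b" "b < c" "c \<le> n" "p c < p a \<and> p a < p b"
  then show False apply - apply (erule notE) apply (rule exI[of _ a], rule exI[of _ b], rule exI[of _ c]) by auto
next
  assume H: "\<forall>a b c. 1 \<le> a \<longrightarrow> a < b \<longrightarrow> b < c \<longrightarrow> c \<le> n \<longrightarrow> \<not> (p c < p a \<and> p a < p b)"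
  assume "(\<exists>a b c. 1 \<le> a \<and> a < b \<and> b < c \<and> c \<le> n \<and> (p b < p a) = ((3::nat) < 2) \<and> (p c < p a) = ((1::nat) < 2) \<and> (p c < p b) = ((1::nat) < 3))"
  then obtain a b c where h: "1 \<le> a" "a < b" "b < c" "c \<le> n" "(p b < p a) = ((3::nat) < 2)" "(p c < p a) = ((1::nat) < 2)" "(p c < p b) = ((1::nat) < 3)" by blast
  have "p a \<noteq> p b" "p a \<noteq> p c" "p b \<noteq> p c" using injD'[OF assms, of a b] injD'[OF assms, of a c] injD'[OF assms, of b c] h by auto
  then show False using H h apply - apply (erule allE[of _ a], erule allE[of _ b], erule allE[of _ c]) by auto
qed
lemma avoids312: assumes "inj_on p {1..n}" shows "avoids p n [3,1,2] \<longleftrightarrow> av312 p n"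
  unfolding avoids_def contains3 av312_def
proof (intro iffI allI impI notI)
  fix a b c assume "\<not> (\<exists>a b c. 1 \<le> a \<and> a < b \<and> b < c \<and> c \<le> n \<and> (p b < p a) = ((1::nat) < 3) \<and> (p c < p a) = ((2::nat) < 3) \<and> (p c < p b) = ((2::nat) < 1))"
    "1 \<le> a" "a < b" "b < c" "c \<le> n" "p b < p c \<and> p c < p a"
  then show False apply - apply (erule notE) apply (rule exI[of _ a], rule exI[of _ b], rule exI[of _ c]) by auto
next
  assume H: "\<forall>a b c. 1 \<le> a \<longrightarrow> a < b \<longrightarrow> b < c \<longrightarrow> c \<le> n \<longrightarrow> \<not> (p b < p c \<and> p c < p a)"
  assume "(\<exists>a b c. 1 \<le> a \<and> a < b \<and> b < c \<and> c \<le> n \<and> (p b < p a) = ((1::nat) < 3) \<and> (p c < p a) = ((2::nat) < 3) \<and> (p c < p b) = ((2::nat) < 1))"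
  then obtain a b c where h: "1 \<le> a" "a < b" "b < c" "c \<le> n" "(p b < p a) = ((1::nat) < 3)" "(p c < p a) = ((2::nat) < 3)" "(p c < p b) = ((2::nat) < 1)" by blast
  have "p a \<noteq> p b" "p a \<noteq> p c" "p b \<noteq> p c" using injD'[OF assms, of a b] injD'[OF assms, of a c] injD'[OF assms, of b c] h by auto
  then show False using H h apply - apply (erule allE[of _ a], erule allE[of _ b], erule allE[of _ c]) by auto
qed
lemma avoids1432: assumes "inj_on p {1..n}" shows "avoids p n [1,4,3,2] \<longleftrightarrow> av1432 p n"
  unfolding avoids_def contains4 av1432_def
proof (intro iffI allI impI notI)
  fix a b c d assume "\<not> (\<exists>a b c d. 1 \<le> a \<and> a < b \<and> b < c \<and> c < d \<and> d \<le> n \<and> (p b < p a) = ((4::nat) < 1) \<and> (p c < p a) = ((3::nat) < 1) \<and> (p d < p a) = ((2::nat) < 1) \<and> (p c < p b) = ((3::nat) < 4) \<and> (p d < p b) = ((2::nat) < 4) \<and> (p d < p c) = ((2::nat) < 3))"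
    "1 \<le> a" "a < b" "b < c" "c < d" "d \<le> n" "p a < p d \<and> p d < p c \<and> p c < p b"
  then show False apply - apply (erule notE) apply (rule exI[of _ a], rule exI[of _ b], rule exI[of _ c], rule exI[of _ d]) by auto
next
  assume H: "\<forall>a b c d. 1 \<le> a \<longrightarrow> a < b \<longrightarrow> b < c \<longrightarrow> c < d \<longrightarrow> d \<le> n \<longrightarrow> \<not> (p a < p d \<and> p d < p c \<and> p c < p b)"
  assume "(\<exists>a b c d. 1 \<le> a \<and> a < b \<and> b < c \<and> c < d \<and> d \<le> n \<and> (p b < p a) = ((4::nat) < 1) \<and> (p c < p a) = ((3::nat) < 1) \<and> (p d < p a) = ((2::nat) < 1) \<and> (p c < p b) = ((3::nat) < 4) \<and> (p d < p b) = ((2::nat) < 4) \<and> (p d < p c) = ((2::nat) < 3))"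
  then obtain a b c d where h: "1 \<le> a" "a < b" "b < c" "c < d" "d \<le> n" "(p b < p a) = ((4::nat) < 1) \<and> (p c < p a) = ((3::nat) < 1) \<and> (p d < p a) = ((2::nat) < 1) \<and> (p c < p b) = ((3::nat) < 4) \<and> (p d < p b) = ((2::nat) < 4) \<and> (p d < p c) = ((2::nat) < 3)" by blast
  have "p a \<noteq> p b" "p a \<noteq> p c" "p b \<noteq> p c" "p a \<noteq> p d" "p b \<noteq> p d" "p c \<noteq> p d"
    using injD'[OF assms, of a b] injD'[OF assms, of a c] injD'[OF assms, of b c]
     injD'[OF assms, of a d] injD'[OF assms, of b d] injD'[OF assms, of c d] h by auto
  then show False using H h apply - apply (erule allE[of _ a], erule allE[of _ b], erule allE[of _ c], erule allE[of _ d]) by auto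
qed
lemma avoids3214: assumes "inj_on p {1..n}" shows "avoids p n [3,2,1,4] \<longleftrightarrow> av3214 p n"
  unfolding avoids_def contains4 av3214_def
proof (intro iffI allI impI notI)
  fix a b c d assume "\<not> (\<exists>a b c d. 1 \<le> a \<and> a < b \<and> b < c \<and> c < d \<and> d \<le> n \<and> (p b < p a) = ((2::nat) < 3) \<and> (p c < p a) = ((1::nat) < 3) \<and> (p d < p a) = ((4::nat) < 3) \<and> (p c < p b) = ((1::nat) < 2) \<and> (p d < p b) = ((4::nat) < 2) \<and> (p d < p c) = ((4::nat) < 1))"
    "1 \<le> a" "a < b" "b < c" "c < d" "d \<le> n" "p c < p b \<and> p b < p a \<and> p a < p d"
  then show False apply - apply (erule notE) apply (rule exI[of _ a], rule exI[of _ b], rule exI[of _ c], rule exI[of _ d]) by auto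
next
  assume H: "\<forall>a b c d. 1 \<le> a \<longrightarrow> a < b \<longrightarrow> b < c \<longrightarrow> c < d \<longrightarrow> d \<le> n \<longrightarrow> \<not> (p c < p b \<and> p b < p a \<and> p a < p d)"
  assume "(\<exists>a b c d. 1 \<le> a \<and> a < b \<and> b < c \<and> c < d \<and> d \<le> n \<and> (p b < p a) = ((2::nat) < 3) \<and> (p c < p a) = ((1::nat) < 3) \<and> (p d < p a) = ((4::nat) < 3) \<and> (p c < p b) = ((1::nat) < 2) \<and> (p d < p b) = ((4::nat) < 2) \<and> (p d < p c) = ((4::nat) < 1))"
  then obtain a b c d where h: "1 \<le> a" "a < b" "b < c" "c < d" "d \<le> n" "(p b < p a) = ((2::nat) < 3) \<and> (p c < p a) = ((1::nat) < 3) \<and> (p d < p a) = ((4::nat) < 3) \<and> (p c < p b) = ((1::nat) < 2) \<and> (p d < p b) = ((4::nat) < 2) \<and> (p d < p c) = ((4::nat) < 1)" by blast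
  have "p a \<noteq> p b" "p a \<noteq> p c" "p b \<noteq> p c" "p a \<noteq> p d" "p b \<noteq> p d" "p c \<noteq> p d"
    using injD'[OF assms, of a b] injD'[OF assms, of a c] injD'[OF assms, of b c]
     injD'[OF assms, of a d] injD'[OF assms, of b d] injD'[OF assms, of c d] h by auto
  then show False using H h apply - apply (erule allE[of _ a], erule allE[of _ b], erule allE[of _ c], erule allE[of _ d]) by auto
qed

definition Q :: "nat \<Rightarrow> nat \<Rightarrow> nat \<Rightarrow> nat" where
  "Q n m = (\<lambda>i. if 1 \<le> i \<and> i \<le> n then (if i \<le> n - m then n + 1 - i else i - (n - m)) else i)"

lemma downclosed:
  assumes fin: "finite W" and sub: "W \<subseteq> {2..}" and dc: "\<forall>w\<in>W. \<forall>y. 2 \<le> y \<longrightarrow> y < w \<longrightarrow> y \<in> W"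
    and cW: "card W = k"
  shows "W = {2..k+1}"
proof -
  have "{2..k+1} \<subseteq> W"
  proof
    fix y assume y: "y \<in> {2..k+1}"
    show "y \<in> W"
    proof (rule ccontr)
      assume ny: "y \<notin> W"
      have "W \<subseteq> {2..y-1}"
      proof
        fix w assume w: "w \<in> W"
        then have "2 \<le> w" using sub by auto
        moreover have "w < y" using dc w ny y by (metis atLeastAtMost_iff linorder_neqE_nat)
        ultimately show "w \<in> {2..y-1}" by auto
      qed
      then have "card W \<le> card {2..y-1}" by (rule card_mono[rotated]) simp
      then show False using y cW by auto
    qed
  qed
  moreover have "card {2..k+1} = card W" using cW by simp
  ultimately show ?thesis using card_subset_eq[OF fin] by metis
qed

lemma inc_interval:
  fixes g :: "nat \<Rightarrow> nat"
  assumes inc: "\<And>i j. 1 \<le> i \<Longrightarrow> i < j \<Longrightarrow> j \<le> L \<Longrightarrow> g i < g j"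
    and bd: "\<And>i. 1 \<le> i \<Longrightarrow> i \<le> L \<Longrightarrow> lo \<le> g i \<and> g i + 1 \<le> lo + L"
    and i: "1 \<le> i" "i \<le> L"
  shows "g i + 1 = lo + i"
proof -
  have a: "\<forall>i. 1 \<le> i \<longrightarrow> i \<le> L \<longrightarrow> lo + i \<le> g i + 1"
  proof (intro allI)
    fix i show "1 \<le> i \<longrightarrow> i \<le> L \<longrightarrow> lo + i \<le> g i + 1"
    proof (induction i)
      case 0 then show ?case by simp
    next
      case (Suc i)
      show ?case
      proof (cases "i = 0")
        case True then show ?thesis using bd[of 1] by auto
      next
        case False
        then show ?thesis using Suc inc[of i "Suc i"] by auto
      qed
    qed
  qed
  have b: "\<forall>j. i + j \<le> L \<longrightarrow> g i + j \<le> g (i + j)"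
  proof (intro allI)
    fix j show "i + j \<le> L \<longrightarrow> g i + j \<le> g (i + j)"
    proof (induction j)
      case 0 then show ?case by simp
    next
      case (Suc j)
      then show ?case using inc[of "i + j" "i + Suc j"] i by auto
    qed
  qed
  have "g i + (L - i) \<le> g L" using b[rule_format, of "L - i"] i by auto
  then show ?thesis using a[rule_format, OF i] bd[of L] i by auto
qed

lemma dec_interval:
  fixes g :: "nat \<Rightarrow> nat"
  assumes dec: "\<And>i j. 1 \<le> i \<Longrightarrow> i < j \<Longrightarrow> j \<le> L \<Longrightarrow> g j < g i"
    and bd: "\<And>i. 1 \<le> i \<Longrightarrow> i \<le> L \<Longrightarrow> lo \<le> g i \<and> g i + 1 \<le> lo + L"
    and i: "1 \<le> i" "i \<le> L"
  shows "g i + i = lo + L"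
proof -
  define h where "h = (\<lambda>j. g (L + 1 - j))"
  have "h (L + 1 - i) + 1 = lo + (L + 1 - i)"
    by (rule inc_interval[where L = L]) (use dec bd i in \<open>auto simp: h_def\<close>)
  then show ?thesis using i by (simp add: h_def)
qed

lemma S3_char:
  assumes n2: "n \<ge> 2" and perm: "p permutes {1..n}" and a1: "av231 p n" and a2: "av231 (p \<circ> p) n"
    and p1: "p 1 = n"
  shows "\<exists>m. 1 \<le> m \<and> 2 * m \<le> n \<and> p = Q n m"
proof -
  have inj: "inj p" using perm by (rule permutes_inj)
  have injE: "\<And>x y. p x = p y \<Longrightarrow> x = y" using inj by (auto simp: inj_def)
  have pin: "\<And>x. 1 \<le> x \<Longrightarrow> x \<le> n \<Longrightarrow> 1 \<le> p x \<and> p x \<le> n"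
    using permutes_in_image[OF perm] by auto
  have psurj: "\<And>y. 1 \<le> y \<Longrightarrow> y \<le> n \<Longrightarrow> \<exists>x. 1 \<le> x \<and> x \<le> n \<and> p x = y"
  proof -
    fix y assume "1 \<le> y" "y \<le> n"
    then have "y \<in> p ` {1..n}" using permutes_image[OF perm] by simp
    then show "\<exists>x. 1 \<le> x \<and> x \<le> n \<and> p x = y" by auto
  qed
  have A1: "\<And>a b c. 1 \<le> a \<Longrightarrow> a < b \<Longrightarrow> b < c \<Longrightarrow> c \<le> n \<Longrightarrow> p c < p a \<Longrightarrow> p a < p b \<Longrightarrow> False"
    using a1 unfolding av231_def by blast
  have A2: "\<And>a b c. 1 \<le> a \<Longrightarrow> a < b \<Longrightarrow> b < c \<Longrightarrow> c \<le> n \<Longrightarrow> p (p c) < p (p a) \<Longrightarrow> p (p a) < p (p b) \<Longrightarrow> False"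
    using a2 unfolding av231_def by auto
  obtain r where r: "1 \<le> r" "r \<le> n" "p r = 1" using psurj[of 1] n2 by auto
  have "r \<noteq> 1"
  proof
    assume "r = 1" then have "p 1 = 1" using r by simp
    then show False using p1 n2 by simp
  qed
  then have r2: "2 \<le> r" using r(1) by linarith
  have ppinj: "\<And>x y. p (p x) = p (p y) \<Longrightarrow> x = y" using injE by blast
  have dec: "\<And>a b. 1 \<le> a \<Longrightarrow> a < b \<Longrightarrow> b \<le> r \<Longrightarrow> p b < p a"
  proof (rule ccontr)
    fix a b assume h: "1 \<le> a" "a < b" "b \<le> r" "\<not> p b < p a"
    have "p a \<noteq> p b" using injE[of a b] h(2) by auto
    then have lt: "p a < p b" using h(4) by auto
    have "p a \<noteq> 1"
    proof
      assume "p a = 1" then have "a = r" using injE[of a r] r(3) by simp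
      then show False using h by simp
    qed
    then have "p r < p a" using pin[of a] h r by auto
    show False
    proof (cases "b = r")
      case True then show False using lt r(3) pin[of a] h r by auto
    next
      case False then show False using A1[of a b r] h r \<open>p r < p a\<close> lt by auto
    qed
  qed
  have ppr: "p (p r) = n" using r p1 by simp
  have E0: "\<And>a c. 1 \<le> a \<Longrightarrow> a < r \<Longrightarrow> r < c \<Longrightarrow> c \<le> n \<Longrightarrow> p (p a) < p (p c)"
  proof -
    fix a c assume h: "1 \<le> a" "a < r" "r < c" "c \<le> n"
    have "p (p a) \<noteq> n"
    proof
      assume "p (p a) = n" then have "a = r" using ppinj[of a r] ppr by simp
      then show False using h by simp
    qed
    moreover have "p (p a) \<le> n" using pin[of a] pin[of "p a"] h r by auto
    ultimately have "p (p a) < p (p r)" using ppr by auto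
    then have "\<not> p (p c) < p (p a)" using A2[of a r c] h by auto
    moreover have "p (p c) \<noteq> p (p a)"
    proof
      assume "p (p c) = p (p a)" then have "c = a" using ppinj[of c a] by simp
      then show False using h by simp
    qed
    ultimately show "p (p a) < p (p c)" by auto
  qed
  have E1: "\<And>x. 1 \<le> x \<Longrightarrow> x < r \<Longrightarrow> p (p x) < r"
  proof (rule ccontr)
    fix x assume h: "1 \<le> x" "x < r" "\<not> p (p x) < r"
    have ppxn: "p (p x) \<noteq> n"
    proof
      assume "p (p x) = n" then have "x = r" using ppinj[of x r] ppr by simp
      then show False using h by simp
    qed
    have ppxle: "p (p x) \<le> n" using pin[of x] pin[of "p x"] h r by auto
    have rn: "r < n" using h ppxn ppxle by auto
    have "(\<lambda>c. p (p c)) ` {r+1..n} \<subseteq> {r+1..n-1}"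
    proof
      fix y assume "y \<in> (\<lambda>c. p (p c)) ` {r+1..n}"
      then obtain c where c: "c \<in> {r+1..n}" "y = p (p c)" by auto
      have "p (p x) < p (p c)" using E0[of x c] h c by auto
      moreover have "p (p c) \<noteq> n"
      proof
        assume "p (p c) = n" then have "c = r" using ppinj[of c r] ppr by simp
        then show False using c by simp
      qed
      moreover have "p (p c) \<le> n" using pin[of c] pin[of "p c"] c by auto
      ultimately show "y \<in> {r+1..n-1}" using c h by auto
    qed
    moreover have "inj_on (\<lambda>c. p (p c)) {r+1..n}" using inj by (auto simp: inj_on_def inj_def)
    ultimately have "card {r+1..n} \<le> card {r+1..n-1}" using card_inj_on_le by blast
    then show False using rn by auto
  qed
  have E2: "\<And>y. 1 \<le> y \<Longrightarrow> y \<le> n \<Longrightarrow> p y < r \<Longrightarrow> \<exists>x. 1 \<le> x \<and> x < r \<and> p x = y"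
  proof -
    fix y assume h: "1 \<le> y" "y \<le> n" "p y < r"
    obtain z where z: "1 \<le> z" "z \<le> n" "p z = y" using psurj h by blast
    show "\<exists>x. 1 \<le> x \<and> x < r \<and> p x = y"
    proof (cases "z < r")
      case True then show ?thesis using z by blast
    next
      case False
      have "z \<noteq> r" using z r h p1 by auto
      then have zr: "r < z" using False by auto
      have "(\<lambda>c. p (p c)) ` {1..r-1} \<subseteq> {1..p y - 1}"
      proof
        fix v assume "v \<in> (\<lambda>c. p (p c)) ` {1..r-1}"
        then obtain a where a: "a \<in> {1..r-1}" "v = p (p a)" by auto
        have "p (p a) < p (p z)" using E0[of a z] a zr z by auto
        moreover have "1 \<le> p (p a)" using pin[of a] pin[of "p a"] a r by auto
        ultimately show "v \<in> {1..p y - 1}" using a z by auto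
      qed
      moreover have "inj_on (\<lambda>c. p (p c)) {1..r-1}" using inj by (auto simp: inj_on_def inj_def)
      ultimately have "card {1..r-1} \<le> card {1..p y - 1}" using card_inj_on_le by blast
      then show ?thesis using h r2 by auto
    qed
  qed
  have ppc: "\<And>c. r < c \<Longrightarrow> c \<le> n \<Longrightarrow> r \<le> p (p c)"
  proof (rule ccontr)
    fix c assume h: "r < c" "c \<le> n" "\<not> r \<le> p (p c)"
    obtain x where "1 \<le> x" "x < r" "p x = p c" using E2[of "p c"] pin[of c] h r by auto
    then show False using injE[of x c] h by auto
  qed
  have pn: "p n < r" using E1[of 1] r2 p1 by auto
  have step4: "\<And>c. r < c \<Longrightarrow> c \<le> n \<Longrightarrow> p c < r"
  proof (rule ccontr)
    fix c assume h: "r < c" "c \<le> n" "\<not> p c < r"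
    have a4: "\<And>c. r < c \<Longrightarrow> c \<le> n \<Longrightarrow> r \<le> p c \<Longrightarrow> r < p c"
    proof -
      fix c assume h: "r < c" "c \<le> n" "r \<le> p c"
      have "p c \<noteq> r" using ppc[OF h(1,2)] r(3) r2 by auto
      then show "r < p c" using h by auto
    qed
    have cn: "c \<noteq> n" using pn h by auto
    obtain a where a: "1 \<le> a" "a \<le> n" "p a = r" using psurj r by blast
    have "a \<noteq> r" using a r r2 by auto
    moreover have "\<not> r < a" using a4[of a] a by auto
    ultimately have ar: "a < r" by auto
    show False using A1[of a c n] a ar h cn pn a4[of c] by auto
  qed
  have step5: "\<And>x. 2 \<le> x \<Longrightarrow> x < r \<Longrightarrow> r \<le> p x \<Longrightarrow> \<exists>c. r < c \<and> c \<le> n \<and> p c = x"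
  proof -
    fix x assume h: "2 \<le> x" "x < r" "r \<le> p x"
    obtain z where z: "1 \<le> z" "z \<le> n" "p z = x" using psurj[of x] h r by auto
    have "z \<noteq> r" using z r h by auto
    moreover have "\<not> z < r" using E1[of z] z h by auto
    ultimately have "r < z" by linarith
    then show "\<exists>c. r < c \<and> c \<le> n \<and> p c = x" using z by blast
  qed
  define k where "k = n - r"
  define W where "W = p ` {r+1..n}"
  have cardW: "card W = k" unfolding W_def k_def
    using card_image[of p "{r+1..n}"] inj by (simp add: inj_on_def inj_def)
  have Wsub: "W \<subseteq> {2..r-1}"
  proof
    fix w assume "w \<in> W"
    then obtain c where c: "r < c" "c \<le> n" "w = p c" unfolding W_def by (auto simp: Suc_le_eq)
    have "p c \<noteq> 1" using r injE[of c r] c by auto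
    then show "w \<in> {2..r-1}" using step4[OF c(1,2)] pin[of c] c r by auto
  qed
  have Wdc: "\<forall>w\<in>W. \<forall>y. 2 \<le> y \<longrightarrow> y < w \<longrightarrow> y \<in> W"
  proof (intro ballI allI impI)
    fix w y assume w: "w \<in> W" and y: "2 \<le> y" "y < w"
    then obtain c where c: "r < c" "c \<le> n" "w = p c" unfolding W_def by (auto simp: Suc_le_eq)
    have "r \<le> p w" using ppc[OF c(1,2)] c by simp
    moreover have "w \<le> r - 1" using w Wsub by auto
    moreover have "w \<le> r" using \<open>w \<le> r - 1\<close> by linarith
    moreover have "p w < p y" using dec[of y w] y \<open>w \<le> r\<close> by linarith
    ultimately have "r < p y" by linarith
    moreover have "y < r" using y \<open>w \<le> r\<close> by linarith
    ultimately obtain c' where "r < c'" "c' \<le> n" "p c' = y" using step5[of y] y by auto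
    then show "y \<in> W" unfolding W_def by (auto simp: Suc_le_eq)
  qed
  have Weq: "W = {2..k+1}"
    by (rule downclosed[OF _ _ Wdc cardW]) (use Wsub in \<open>auto simp: W_def\<close>)
  have step7: "\<And>i. 1 \<le> i \<Longrightarrow> i < r \<Longrightarrow> p i + i = n + 1"
  proof -
    fix i assume i: "1 \<le> i" "i < r"
    have bd: "\<And>i. 1 \<le> i \<Longrightarrow> i \<le> r - 1 \<Longrightarrow> k + 2 \<le> p i \<and> p i + 1 \<le> k + 2 + (r - 1)"
    proof -
      fix i assume i: "1 \<le> i" "i \<le> r - 1"
      have "p i \<notin> W"
      proof
        assume "p i \<in> W"
        then obtain c where "r < c" "p i = p c" unfolding W_def by (auto simp: Suc_le_eq)
        then show False using injE[of i c] i by simp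
      qed
      moreover have "p i \<noteq> 1" using injE[of i r] r i by auto
      moreover have "1 \<le> p i \<and> p i \<le> n" using pin[of i] i r by auto
      ultimately show "k + 2 \<le> p i \<and> p i + 1 \<le> k + 2 + (r - 1)" using Weq k_def r r2 by auto
    qed
    have "p i + i = k + 2 + (r - 1)"
      by (rule dec_interval[where L = "r - 1"]) (use dec bd i in auto)
    then show "p i + i = n + 1" using k_def r r2 by auto
  qed
  have kr: "k \<ge> 1 \<Longrightarrow> k + 1 \<le> r - 1" using Weq Wsub by auto
  have step8: "\<And>b c. r < b \<Longrightarrow> b < c \<Longrightarrow> c \<le> n \<Longrightarrow> p b < p c"
  proof (rule ccontr)
    fix b c assume h: "r < b" "b < c" "c \<le> n" "\<not> p b < p c"
    have "p b \<noteq> p c" using injE[of b c] h by auto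
    then have lt: "p c < p b" using h by auto
    have k1: "k \<ge> 1" using h k_def by auto
    have nr: "n + 1 - r < r" using kr[OF k1] k_def r2 h by auto
    have refl: "\<And>x. r \<le> x \<Longrightarrow> x \<le> n \<Longrightarrow> p (n + 1 - x) = x"
    proof -
      fix x assume x: "r \<le> x" "x \<le> n"
      have "1 \<le> n + 1 - x" "n + 1 - x < r" using x nr by arith+
      then have "p (n + 1 - x) + (n + 1 - x) = n + 1" by (rule step7)
      then show "p (n + 1 - x) = x" using x by arith
    qed
    have s1: "p (n + 1 - c) = c" "p (n + 1 - b) = b" "p (n + 1 - r) = r"
      using refl[of c] refl[of b] refl[of r] h by auto
    have "p c \<noteq> 1" using injE[of c r] r h by auto
    then have "1 < p c" using pin[of c] h r by auto
    moreover have o: "1 \<le> n + 1 - c" "n + 1 - c < n + 1 - b" "n + 1 - b < n + 1 - r" "n + 1 - r \<le> n"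
      using h r2 by arith+
    ultimately show False using A2[OF o] s1 lt r by simp
  qed
  have step9: "\<And>i. r < i \<Longrightarrow> i \<le> n \<Longrightarrow> p i + r = i + 1"
  proof -
    fix i assume i: "r < i" "i \<le> n"
    have "(\<lambda>j. p (r + j)) (i - r) + 1 = 2 + (i - r)"
    proof (rule inc_interval[where L = k])
      show "\<And>a b. 1 \<le> a \<Longrightarrow> a < b \<Longrightarrow> b \<le> k \<Longrightarrow> p (r + a) < p (r + b)"
        using step8 k_def by auto
      show "\<And>a. 1 \<le> a \<Longrightarrow> a \<le> k \<Longrightarrow> 2 \<le> p (r + a) \<and> p (r + a) + 1 \<le> 2 + k"
      proof -
        fix a assume a: "1 \<le> a" "a \<le> k"
        have "p (r + a) \<in> W" unfolding W_def using a k_def by auto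
        then show "2 \<le> p (r + a) \<and> p (r + a) + 1 \<le> 2 + k" using Weq by auto
      qed
    qed (use i k_def in auto)
    then show "p i + r = i + 1" using i by auto
  qed
  define m where "m = k + 1"
  have m1: "1 \<le> m" using m_def by auto
  have m2: "2 * m \<le> n"
  proof (cases "k = 0")
    case True then show ?thesis using m_def n2 by auto
  next
    case False
    then have "k + 1 \<le> r - 1" using kr by linarith
    then show ?thesis using m_def k_def r by arith
  qed
  have "p = Q n m"
  proof
    fix i show "p i = Q n m i"
    proof (cases "1 \<le> i \<and> i \<le> n")
      case False
      then have "i \<notin> {1..n}" by auto
      then have "p i = i" by (rule permutes_not_in[OF perm])
      moreover have "Q n m i = i" using False unfolding Q_def by auto
      ultimately show ?thesis by simp
    next
      case True
      have nm: "n - m = r - 1" using m_def k_def r by auto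
      show ?thesis
      proof (cases "i < r")
        case True2: True
        have "Q n m i = n + 1 - i" using True nm True2 by (simp add: Q_def)
        moreover have "p i + i = n + 1" using step7[of i] True True2 by simp
        ultimately show ?thesis by arith
      next
        case False
        show ?thesis
        proof (cases "i = r")
          case True3: True
          have "Q n m i = i - (n - m)" using True nm True3 r2 by (simp add: Q_def)
          then show ?thesis using r nm True3 r2 by simp
        next
          case False2: False
          have ri: "r < i" using False False2 by linarith
          have "Q n m i = i - (n - m)" using True nm ri by (simp add: Q_def)
          moreover have "p i + r = i + 1" using step9[of i] True ri by simp
          ultimately show ?thesis using nm r2 by arith
        qed
      qed
    qed
  qed
  then show ?thesis using m1 m2 by blast
qed

definition Aset :: "nat \<Rightarrow> (nat \<Rightarrow> nat) set" where
  "Aset n = {p. p permutes {1..n} \<and> av231 p n \<and> av1432 p n \<and> av231 (p \<circ> p) n}"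

lemma Q_cases: "m \<le> n \<Longrightarrow> 1 \<le> i \<Longrightarrow> i \<le> n \<Longrightarrow>
   (i + m \<le> n \<and> Q n m i + i = n + 1) \<or> (n < i + m \<and> Q n m i + n = i + m)"
  unfolding Q_def by (cases "i + m \<le> n") auto

lemma Q_range: "1 \<le> m \<Longrightarrow> 2 * m \<le> n \<Longrightarrow> 1 \<le> i \<Longrightarrow> i \<le> n \<Longrightarrow> 1 \<le> Q n m i \<and> Q n m i \<le> n"
proof -
  assume a: "1 \<le> m" "2 * m \<le> n" "1 \<le> i" "i \<le> n"
  then have "m \<le> n" by linarith
  then show ?thesis using Q_cases[OF \<open>m \<le> n\<close> a(3) a(4)] a apply - apply (elim disjE conjE) apply linarith+ done
qed

lemma QQ_cases: assumes "1 \<le> m" "2 * m \<le> n" "1 \<le> i" "i \<le> n"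
  shows "(i \<le> m \<and> Q n m (Q n m i) + i = m + 1) \<or> (m < i \<and> i + m \<le> n \<and> Q n m (Q n m i) = i)
     \<or> (n < i + m \<and> Q n m (Q n m i) + i + m = 2 * n + 1)"
proof -
  have r: "1 \<le> Q n m i \<and> Q n m i \<le> n" using Q_range assms by blast
  have "m \<le> n" using assms by linarith
  then show ?thesis using Q_cases[of m n i] Q_cases[of m n "Q n m i"] r assms
    apply - apply (elim disjE conjE) apply linarith+ done
qed

lemma Q_perm: assumes "1 \<le> m" "2 * m \<le> n" shows "Q n m permutes {1..n}"
proof (rule inj_imp_permutes)
  have mn: "m \<le> n" using assms by linarith
  show "inj_on (Q n m) {1..n}"
  proof (rule inj_onI)
    fix x y assume "x \<in> {1..n}" "y \<in> {1..n}" "Q n m x = Q n m y"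
    then show "x = y" using Q_cases[OF mn, of x] Q_cases[OF mn, of y] by (simp; elim disjE conjE; linarith)
  qed
  show "\<And>x. x \<in> {1..n} \<Longrightarrow> Q n m x \<in> {1..n}" using Q_range[OF assms] by auto
  show "\<And>x. x \<notin> {1..n} \<Longrightarrow> Q n m x = x" by (auto simp: Q_def)
qed simp

lemma Q_in_A: assumes m: "1 \<le> m" "2 * m \<le> n" shows "Q n m \<in> Aset n"
proof -
  have mn: "m \<le> n" using m by linarith
  have "av231 (Q n m) n"
    unfolding av231_def
  proof (intro allI impI notI)
    fix a b c assume h: "1 \<le> a" "a < b" "b < c" "c \<le> n" "Q n m c < Q n m a \<and> Q n m a < Q n m b"
    have Ba: "1 \<le> a" "a \<le> n" and Bb: "1 \<le> b" "b \<le> n" and Bc: "1 \<le> c" "c \<le> n" using h by linarith+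
    show False using Q_cases[OF mn, of a, OF Ba] Q_cases[OF mn, of b, OF Bb] Q_cases[OF mn, of c, OF Bc] h
      apply - apply (elim disjE conjE) apply linarith+ done
  qed
  moreover have "av1432 (Q n m) n"
    unfolding av1432_def
  proof (intro allI impI notI)
    fix a b c d assume h: "1 \<le> a" "a < b" "b < c" "c < d" "d \<le> n"
      "Q n m a < Q n m d \<and> Q n m d < Q n m c \<and> Q n m c < Q n m b"
    have Ba: "1 \<le> a" "a \<le> n" and Bb: "1 \<le> b" "b \<le> n" and Bc: "1 \<le> c" "c \<le> n" and Bd: "1 \<le> d" "d \<le> n" using h by linarith+
    show False using Q_cases[OF mn, of a, OF Ba] Q_cases[OF mn, of b, OF Bb] Q_cases[OF mn, of c, OF Bc] Q_cases[OF mn, of d, OF Bd] h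
      apply - apply (elim disjE conjE) apply linarith+ done
  qed
  moreover have "av231 (Q n m \<circ> Q n m) n"
    unfolding av231_def comp_def
  proof (intro allI impI notI)
    fix a b c assume h: "1 \<le> a" "a < b" "b < c" "c \<le> n"
      "Q n m (Q n m c) < Q n m (Q n m a) \<and> Q n m (Q n m a) < Q n m (Q n m b)"
    have Ba: "1 \<le> a" "a \<le> n" and Bb: "1 \<le> b" "b \<le> n" and Bc: "1 \<le> c" "c \<le> n" using h by linarith+
    show False using QQ_cases[OF m Ba] QQ_cases[OF m Bb] QQ_cases[OF m Bc] h m
      apply - apply (elim disjE conjE) apply linarith+ done
  qed
  ultimately show ?thesis using Q_perm[OF m] by (simp add: Aset_def)
qed

lemma Q_1: "1 \<le> m \<Longrightarrow> 2 * m \<le> n \<Longrightarrow> Q n m 1 = n"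
  by (simp add: Q_def)

lemma Q_n: "1 \<le> m \<Longrightarrow> 2 * m \<le> n \<Longrightarrow> Q n m n = m"
  by (simp add: Q_def)

lemma Q_inj: "inj_on (Q n) {1..n div 2}"
proof (rule inj_onI)
  fix m m' assume a: "m \<in> {1..n div 2}" "m' \<in> {1..n div 2}" and e: "Q n m = Q n m'"
  have "2 * m \<le> n" "2 * m' \<le> n" "1 \<le> m" "1 \<le> m'" using a by auto
  then show "m = m'" using Q_n[of m n] Q_n[of m' n] e by metis
qed

lemma perm_range: "p permutes {1..n} \<Longrightarrow> 1 \<le> x \<Longrightarrow> x \<le> n \<Longrightarrow> 1 \<le> p x \<and> p x \<le> n"
  using permutes_in_image[of p "{1..n}" x] by auto

lemma perm_restrict: "p permutes S \<Longrightarrow> p a = a \<Longrightarrow> p permutes (S - {a})"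
  unfolding permutes_def by auto

lemma P1:
  assumes n3: "n \<ge> 3" and perm: "p permutes {1..n}" and a1: "av231 p n" and a4: "av1432 p n"
    and a2: "av231 (p \<circ> p) n" and k: "1 < k" "k < n" "p k = n"
  shows "k = n - 1 \<and> p n = n - 1"
proof -
  have inj: "inj p" using perm by (rule permutes_inj)
  have injE: "\<And>x y. p x = p y \<Longrightarrow> x = y" using inj by (auto simp: inj_def)
  have pin: "\<And>x. 1 \<le> x \<Longrightarrow> x \<le> n \<Longrightarrow> 1 \<le> p x \<and> p x \<le> n" using perm_range[OF perm] by blast
  have psurj: "\<And>y. 1 \<le> y \<Longrightarrow> y \<le> n \<Longrightarrow> \<exists>x. 1 \<le> x \<and> x \<le> n \<and> p x = y"
  proof -
    fix y assume "1 \<le> y" "y \<le> n"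
    then have "y \<in> p ` {1..n}" using permutes_image[OF perm] by simp
    then show "\<exists>x. 1 \<le> x \<and> x \<le> n \<and> p x = y" by auto
  qed
  have A1: "\<And>a b c. 1 \<le> a \<Longrightarrow> a < b \<Longrightarrow> b < c \<Longrightarrow> c \<le> n \<Longrightarrow> p c < p a \<Longrightarrow> p a < p b \<Longrightarrow> False"
    using a1 unfolding av231_def by blast
  have A2: "\<And>a b c. 1 \<le> a \<Longrightarrow> a < b \<Longrightarrow> b < c \<Longrightarrow> c \<le> n \<Longrightarrow> p (p c) < p (p a) \<Longrightarrow> p (p a) < p (p b) \<Longrightarrow> False"
    using a2 unfolding av231_def by auto
  have A4: "\<And>a b c d. 1 \<le> a \<Longrightarrow> a < b \<Longrightarrow> b < c \<Longrightarrow> c < d \<Longrightarrow> d \<le> n \<Longrightarrow> p a < p d \<Longrightarrow> p d < p c \<Longrightarrow> p c < p b \<Longrightarrow> False"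
    using a4 unfolding av1432_def by blast
  have ltn: "\<And>x. 1 \<le> x \<Longrightarrow> x \<le> n \<Longrightarrow> x \<noteq> k \<Longrightarrow> p x < n"
  proof -
    fix x assume x: "1 \<le> x" "x \<le> n" "x \<noteq> k"
    have "p x \<noteq> n" using injE[of x k] k x by auto
    then show "p x < n" using pin[OF x(1,2)] by linarith
  qed
  have mid: "\<And>a c. 1 \<le> a \<Longrightarrow> a < k \<Longrightarrow> k < c \<Longrightarrow> c \<le> n \<Longrightarrow> p a < p c"
  proof -
    fix a c assume h: "1 \<le> a" "a < k" "k < c" "c \<le> n"
    have "p a < p k" using ltn[of a] h k by simp
    then have "\<not> p c < p a" using A1[of a k c] h by blast
    moreover have "p c \<noteq> p a" using injE[of c a] h by auto
    ultimately show "p a < p c" by linarith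
  qed
  have inc: "\<And>c e. k < c \<Longrightarrow> c < e \<Longrightarrow> e \<le> n \<Longrightarrow> p c < p e"
  proof (rule ccontr)
    fix c e assume h: "k < c" "c < e" "e \<le> n" "\<not> p c < p e"
    have "p c \<noteq> p e" using injE[of c e] h by auto
    then have "p e < p c" using h by linarith
    moreover have "p 1 < p e" using mid[of 1 e] h k by simp
    moreover have "p c < p k" using ltn[of c] h k by simp
    ultimately show False using A4[of 1 k c e] h k by simp
  qed
  have pn: "p n = n - 1"
  proof -
    have "p n < n" using ltn[of n] k by simp
    have "1 \<le> n - 1" "n - 1 \<le> n" using n3 by linarith+
    then obtain y where y: "1 \<le> y" "y \<le> n" "p y = n - 1" using psurj[of "n - 1"] by blast
    have "y \<noteq> k" using y k n3 by auto
    show ?thesis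
    proof (cases "y = n")
      case True then show ?thesis using y by simp
    next
      case False
      have "p y < p n"
      proof (cases "y < k")
        case True then show ?thesis using mid[of y n] y k by simp
      next
        case False
        then show ?thesis using inc[of y n] y k \<open>y \<noteq> k\<close> \<open>y \<noteq> n\<close> by simp
      qed
      then show ?thesis using y \<open>p n < n\<close> by simp
    qed
  qed
  have "k = n - 1"
  proof (rule ccontr)
    assume "k \<noteq> n - 1"
    then have kn: "k + 1 < n" using k by linarith
    have grow: "\<And>j. k + 1 + j \<le> n \<Longrightarrow> p (k + 1) + j \<le> p (k + 1 + j)"
    proof -
      fix j show "k + 1 + j \<le> n \<Longrightarrow> p (k + 1) + j \<le> p (k + 1 + j)"
      proof (induction j)
        case 0 then show ?case by simp
      next
        case (Suc j)
        then have "p (k + 1 + j) < p (k + 1 + Suc j)" using inc[of "k + 1 + j" "k + 1 + Suc j"] by simp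
        then show ?case using Suc by simp
      qed
    qed
    have "p (k + 1) + (n - k - 1) \<le> p n" using grow[of "n - k - 1"] kn by simp
    then have pk1: "p (k + 1) \<le> k" using pn kn by linarith
    obtain y where y: "1 \<le> y" "y \<le> n" "p y = k" using psurj[of k] k by auto
    have "y \<noteq> k" using y k by auto
    have "y \<noteq> n" using y pn kn by auto
    have "\<not> y < k"
    proof
      assume "y < k" then have "p y < p (k + 1)" using mid[of y "k + 1"] y kn by simp
      then show False using y pk1 by simp
    qed
    then have yk: "k < y" "y < n" using \<open>y \<noteq> k\<close> \<open>y \<noteq> n\<close> y by auto
    have "p (n - 1) < p n" using inc[of "n - 1" n] kn by simp
    then have "p (p n) < p (p k)" using pn k by simp
    moreover have "p (p k) < p (p y)" using k y pn by simp
    ultimately show False using A2[of k y n] k yk by simp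
  qed
  then show ?thesis using pn by simp
qed


lemma av231_mono: "av231 p (Suc N) \<Longrightarrow> av231 p N"
  unfolding av231_def by (meson le_SucI)

lemma av1432_mono: "av1432 p (Suc N) \<Longrightarrow> av1432 p N"
  unfolding av1432_def by (meson le_SucI)

lemma av231_ext:
  assumes "av231 p N" "p (Suc N) = Suc N" "\<And>x. 1 \<le> x \<Longrightarrow> x \<le> Suc N \<Longrightarrow> p x \<le> Suc N"
  shows "av231 p (Suc N)"
  unfolding av231_def
proof (intro allI impI notI)
  fix a b c assume h: "1 \<le> a" "a < b" "b < c" "c \<le> Suc N" "p c < p a \<and> p a < p b"
  show False
  proof (cases "c = Suc N")
    case True
    then show False using h assms(2) assms(3)[of a] by simp
  next
    case False
    then show False using h assms(1) unfolding av231_def by (meson le_Suc_eq)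
  qed
qed

lemma av1432_ext:
  assumes "av1432 p N" "p (Suc N) = Suc N" "\<And>x. 1 \<le> x \<Longrightarrow> x \<le> Suc N \<Longrightarrow> p x \<le> Suc N"
  shows "av1432 p (Suc N)"
  unfolding av1432_def
proof (intro allI impI notI)
  fix a b c d assume h: "1 \<le> a" "a < b" "b < c" "c < d" "d \<le> Suc N" "p a < p d \<and> p d < p c \<and> p c < p b"
  show False
  proof (cases "d = Suc N")
    case True
    then show False using h assms(2) assms(3)[of c] by simp
  next
    case False
    then show False using h assms(1) unfolding av1432_def by (meson le_Suc_eq)
  qed
qed

lemma S1_eq: "Aset N = {p \<in> Aset (Suc N). p (Suc N) = Suc N}"
proof (intro set_eqI iffI)
  fix p assume "p \<in> Aset N"
  then have perm: "p permutes {1..N}" and a: "av231 p N" "av1432 p N" "av231 (p \<circ> p) N"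
    by (auto simp: Aset_def)
  have perm': "p permutes {1..Suc N}" using permutes_subset[OF perm] by auto
  have fix1: "p (Suc N) = Suc N" using permutes_not_in[OF perm] by auto
  have bd: "\<And>x. 1 \<le> x \<Longrightarrow> x \<le> Suc N \<Longrightarrow> p x \<le> Suc N" using perm_range[OF perm'] by blast
  have bd2: "\<And>x. 1 \<le> x \<Longrightarrow> x \<le> Suc N \<Longrightarrow> (p \<circ> p) x \<le> Suc N" using perm_range[OF perm'] by force
  show "p \<in> {p \<in> Aset (Suc N). p (Suc N) = Suc N}"
  proof -
    have fix2: "(p \<circ> p) (Suc N) = Suc N" using fix1 by simp
    show ?thesis unfolding Aset_def
      using av231_ext[OF a(1) fix1 bd] av1432_ext[OF a(2) fix1 bd] av231_ext[OF a(3) fix2 bd2] fix1 perm' by blast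
  qed
next
  fix p assume "p \<in> {p \<in> Aset (Suc N). p (Suc N) = Suc N}"
  then have perm: "p permutes {1..Suc N}" and a: "av231 p (Suc N)" "av1432 p (Suc N)" "av231 (p \<circ> p) (Suc N)"
    and fix1: "p (Suc N) = Suc N" by (auto simp: Aset_def)
  have "p permutes ({1..Suc N} - {Suc N})" by (rule perm_restrict[OF perm fix1])
  moreover have "{1..Suc N} - {Suc N} = {1..N}" by auto
  ultimately have "p permutes {1..N}" by simp
  then show "p \<in> Aset N" unfolding Aset_def using av231_mono[OF a(1)] av1432_mono[OF a(2)] av231_mono[OF a(3)]
    by blast
qed


lemma av231_cong:
  assumes "\<And>x. 1 \<le> x \<Longrightarrow> x \<le> N \<Longrightarrow> f x = g x"
  shows "av231 f N = av231 g N"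
proof -
  have e: "\<And>a b c. 1 \<le> a \<Longrightarrow> a < b \<Longrightarrow> b < c \<Longrightarrow> c \<le> N \<Longrightarrow> f a = g a \<and> f b = g b \<and> f c = g c"
  proof -
    fix a b c assume h: "1 \<le> a" "a < b" "b < c" "c \<le> N"
    have "1 \<le> b" "b \<le> N" "1 \<le> c" "a \<le> N" using h by linarith+
    then show "f a = g a \<and> f b = g b \<and> f c = g c" using assms h by simp
  qed
  show ?thesis unfolding av231_def
  proof (intro iffI allI impI)
    fix a b c assume H: "\<forall>a b c. 1 \<le> a \<longrightarrow> a < b \<longrightarrow> b < c \<longrightarrow> c \<le> N \<longrightarrow> \<not> (f c < f a \<and> f a < f b)"
      and h: "1 \<le> a" "a < b" "b < c" "c \<le> N"
    show "\<not> (g c < g a \<and> g a < g b)" using H[rule_format, OF h] e[OF h] by simp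
  next
    fix a b c assume H: "\<forall>a b c. 1 \<le> a \<longrightarrow> a < b \<longrightarrow> b < c \<longrightarrow> c \<le> N \<longrightarrow> \<not> (g c < g a \<and> g a < g b)"
      and h: "1 \<le> a" "a < b" "b < c" "c \<le> N"
    show "\<not> (f c < f a \<and> f a < f b)" using H[rule_format, OF h] e[OF h] by simp
  qed
qed

lemma pair_ext:
  assumes eq: "\<And>x. 1 \<le> x \<Longrightarrow> x \<le> N \<Longrightarrow> f x = g x"
    and gb: "\<And>x. 1 \<le> x \<Longrightarrow> x \<le> N \<Longrightarrow> g x \<le> N"
    and f1: "f (Suc N) = Suc (Suc N)" and f2: "f (Suc (Suc N)) = Suc N"
  shows "av231 f (Suc (Suc N)) \<longleftrightarrow> av231 g N" and "av1432 f (Suc (Suc N)) \<longleftrightarrow> av1432 g N"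
proof -
  have fb: "\<And>x. 1 \<le> x \<Longrightarrow> x \<le> N \<Longrightarrow> f x \<le> N" using eq gb by simp
  have c1: "av231 f N = av231 g N" by (rule av231_cong[OF eq])
  show "av231 f (Suc (Suc N)) \<longleftrightarrow> av231 g N"
  proof
    assume "av231 f (Suc (Suc N))"
    then show "av231 g N" using c1 av231_mono by blast
  next
    assume G: "av231 g N"
    then have F: "av231 f N" using c1 by simp
    show "av231 f (Suc (Suc N))" unfolding av231_def
    proof (intro allI impI notI)
      fix a b c assume h: "1 \<le> a" "a < b" "b < c" "c \<le> Suc (Suc N)" "f c < f a \<and> f a < f b"
      consider "c \<le> N" | "c = Suc N" | "c = Suc (Suc N)" using h by linarith
      then show False
      proof cases
        case 1 then show False using F h unfolding av231_def by blast
      next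
        case 2 then have "a \<le> N" using h by linarith
        then show False using fb[of a] h 2 f1 by simp
      next
        case 3
        show False
        proof (cases "a \<le> N")
          case True then show False using fb[of a] h 3 f2 by simp
        next
          case False then show False using h 3 by linarith
        qed
      qed
    qed
  qed
  show "av1432 f (Suc (Suc N)) \<longleftrightarrow> av1432 g N"
  proof
    assume "av1432 f (Suc (Suc N))"
    then have "av1432 f N" using av1432_mono by blast
    then show "av1432 g N" unfolding av1432_def
    proof (intro allI impI notI)
      fix a b c d assume H: "\<forall>a b c d. 1 \<le> a \<longrightarrow> a < b \<longrightarrow> b < c \<longrightarrow> c < d \<longrightarrow> d \<le> N \<longrightarrow> \<not> (f a < f d \<and> f d < f c \<and> f c < f b)"
        and h: "1 \<le> a" "a < b" "b < c" "c < d" "d \<le> N" "g a < g d \<and> g d < g c \<and> g c < g b"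
      have "1 \<le> b" "b \<le> N" "1 \<le> c" "c \<le> N" "1 \<le> d" "a \<le> N" using h by linarith+
      then show False using H[rule_format, OF h(1-5)] h eq[of a] eq[of b] eq[of c] eq[of d] by simp
    qed
  next
    assume G: "av1432 g N"
    show "av1432 f (Suc (Suc N))" unfolding av1432_def
    proof (intro allI impI notI)
      fix a b c d assume h: "1 \<le> a" "a < b" "b < c" "c < d" "d \<le> Suc (Suc N)" "f a < f d \<and> f d < f c \<and> f c < f b"
      consider "d \<le> N" | "d = Suc N" | "d = Suc (Suc N)" using h by linarith
      then show False
      proof cases
        case 1
        have "1 \<le> b" "b \<le> N" "1 \<le> c" "c \<le> N" "1 \<le> d" "a \<le> N" using h 1 by linarith+
        then show False using G[unfolded av1432_def, rule_format, OF h(1-4) 1] h eq[of a] eq[of b] eq[of c] eq[of d] 1 by simp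
      next
        case 2 then have "c \<le> N" "1 \<le> c" using h by linarith+
        then show False using fb[of c] h 2 f1 by simp
      next
        case 3
        show False
        proof (cases "c \<le> N")
          case True
          have "1 \<le> c" using h by linarith
          then show False using fb[of c] h 3 f2 True by simp
        next
          case False
          then have "c = Suc N" "b \<le> N" "1 \<le> b" using h 3 by linarith+
          then show False using fb[of b] h f1 by simp
        qed
      qed
    qed
  qed
qed


lemma QQ_fix:
  assumes perm: "q permutes {1..N}"
  shows "\<And>x. 1 \<le> x \<Longrightarrow> x \<le> N \<Longrightarrow> (q \<circ> q) x \<le> N"
    and "(q \<circ> q) (Suc N) = Suc N" and "(q \<circ> q) (Suc (Suc N)) = Suc (Suc N)"
  using perm_range[OF perm] permutes_not_in[OF perm] by auto

lemma S2_eq: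
  "{p \<in> Aset (Suc (Suc N)). p (Suc N) = Suc (Suc N) \<and> p (Suc (Suc N)) = Suc N}
     = (\<lambda>q. Transposition.transpose (Suc N) (Suc (Suc N)) \<circ> q) ` Aset N"
  (is "?L = ?R")
proof -
  define t where "t = Transposition.transpose (Suc N) (Suc (Suc N))"
  have tperm: "t permutes {1..Suc (Suc N)}" unfolding t_def by (rule permutes_swap_id) auto
  have tt: "t \<circ> t = id" unfolding t_def by simp
  have t1: "t (Suc N) = Suc (Suc N)" "t (Suc (Suc N)) = Suc N" unfolding t_def by simp_all
  have tfix: "\<And>x. x \<le> N \<Longrightarrow> t x = x" unfolding t_def by simp
  have sub: "{1..N} \<subseteq> {1..Suc (Suc N)}" by auto
  have key: "t \<circ> q \<in> ?L" if q: "q \<in> Aset N" for q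
  proof -
    have perm: "q permutes {1..N}" and a: "av231 q N" "av1432 q N" "av231 (q \<circ> q) N"
      using q by (auto simp: Aset_def)
    define p where "p = t \<circ> q"
    have qb: "\<And>x. 1 \<le> x \<Longrightarrow> x \<le> N \<Longrightarrow> q x \<le> N" using perm_range[OF perm] by blast
    have qf: "q (Suc N) = Suc N" "q (Suc (Suc N)) = Suc (Suc N)" using permutes_not_in[OF perm] by auto
    have eq: "\<And>x. 1 \<le> x \<Longrightarrow> x \<le> N \<Longrightarrow> p x = q x" using qb tfix by (simp add: p_def)
    have p1: "p (Suc N) = Suc (Suc N)" "p (Suc (Suc N)) = Suc N" using qf t1 by (simp_all add: p_def)
    have pperm: "p permutes {1..Suc (Suc N)}" unfolding p_def
      by (rule permutes_compose[OF permutes_subset[OF perm sub] tperm])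
    have pp: "\<And>x. 1 \<le> x \<Longrightarrow> x \<le> Suc (Suc N) \<Longrightarrow> (p \<circ> p) x = (q \<circ> q) x"
    proof -
      fix x assume x: "1 \<le> x" "x \<le> Suc (Suc N)"
      consider "x \<le> N" | "x = Suc N" | "x = Suc (Suc N)" using x by linarith
      then show "(p \<circ> p) x = (q \<circ> q) x"
      proof cases
        case 1 then show ?thesis using eq[of x] eq[of "q x"] qb[of x] perm_range[OF perm, of x] x by simp
      next
        case 2 then show ?thesis using p1 qf by simp
      next
        case 3 then show ?thesis using p1 qf by simp
      qed
    qed
    have qq: "av231 (q \<circ> q) (Suc (Suc N))"
    proof (rule av231_ext)
      show "av231 (q \<circ> q) (Suc N)"
      proof (rule av231_ext[OF a(3)])
        show "(q \<circ> q) (Suc N) = Suc N" using qf by simp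
        show "\<And>x. 1 \<le> x \<Longrightarrow> x \<le> Suc N \<Longrightarrow> (q \<circ> q) x \<le> Suc N"
          using QQ_fix[OF perm] by (metis le_Suc_eq le_SucI)
      qed
      show "(q \<circ> q) (Suc (Suc N)) = Suc (Suc N)" using qf by simp
      show "\<And>x. 1 \<le> x \<Longrightarrow> x \<le> Suc (Suc N) \<Longrightarrow> (q \<circ> q) x \<le> Suc (Suc N)"
        using QQ_fix[OF perm] by (metis le_Suc_eq le_SucI)
    qed
    have "av231 (p \<circ> p) (Suc (Suc N)) = av231 (q \<circ> q) (Suc (Suc N))" by (rule av231_cong[OF pp])
    then have "av231 (p \<circ> p) (Suc (Suc N))" using qq by simp
    moreover have "av231 p (Suc (Suc N))" "av1432 p (Suc (Suc N))"
      using pair_ext[OF eq qb p1] a by simp_all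
    ultimately show "t \<circ> q \<in> ?L" using pperm p1 unfolding p_def Aset_def by simp
  qed
  have key2: "p \<in> ?R" if p: "p \<in> ?L" for p
  proof -
    have perm: "p permutes {1..Suc (Suc N)}" and a: "av231 p (Suc (Suc N))" "av1432 p (Suc (Suc N))"
      "av231 (p \<circ> p) (Suc (Suc N))" and p1: "p (Suc N) = Suc (Suc N)" "p (Suc (Suc N)) = Suc N"
      using p by (auto simp: Aset_def)
    have injE: "\<And>x y. p x = p y \<Longrightarrow> x = y" using permutes_inj[OF perm] by (auto simp: inj_def)
    define q where "q = t \<circ> p"
    have pq: "p = t \<circ> q" unfolding q_def by (simp add: o_assoc tt)
    have qperm0: "q permutes {1..Suc (Suc N)}" unfolding q_def by (rule permutes_compose[OF perm tperm])
    have qf: "q (Suc N) = Suc N" "q (Suc (Suc N)) = Suc (Suc N)" using p1 t1 by (simp_all add: q_def)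
    have "q permutes ({1..Suc (Suc N)} - {Suc (Suc N)} - {Suc N})"
      by (rule perm_restrict[OF perm_restrict[OF qperm0 qf(2)] qf(1)])
    moreover have "{1..Suc (Suc N)} - {Suc (Suc N)} - {Suc N} = {1..N}" by auto
    ultimately have qperm: "q permutes {1..N}" by simp
    have pb: "\<And>x. 1 \<le> x \<Longrightarrow> x \<le> N \<Longrightarrow> p x \<le> N"
    proof -
      fix x assume x: "1 \<le> x" "x \<le> N"
      have "p x \<le> Suc (Suc N)" using perm_range[OF perm, of x] x by simp
      moreover have "p x \<noteq> Suc (Suc N)" using injE[of x "Suc N"] p1 x by auto
      moreover have "p x \<noteq> Suc N" using injE[of x "Suc (Suc N)"] p1 x by auto
      ultimately show "p x \<le> N" by linarith
    qed
    have eq: "\<And>x. 1 \<le> x \<Longrightarrow> x \<le> N \<Longrightarrow> p x = q x" using pb tfix by (simp add: q_def)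
    have qb: "\<And>x. 1 \<le> x \<Longrightarrow> x \<le> N \<Longrightarrow> q x \<le> N" using pb eq by simp
    have "av231 q N" "av1432 q N" using pair_ext[OF eq qb p1] a by simp_all
    moreover have "av231 (q \<circ> q) N"
    proof -
      have "av231 (p \<circ> p) N" using a(3) av231_mono by blast
      moreover have "\<And>x. 1 \<le> x \<Longrightarrow> x \<le> N \<Longrightarrow> (p \<circ> p) x = (q \<circ> q) x"
      proof -
        fix x assume x: "1 \<le> x" "x \<le> N"
        have "1 \<le> p x" using perm_range[OF perm, of x] x by simp
        then show "(p \<circ> p) x = (q \<circ> q) x" using eq[of x] eq[of "p x"] pb[of x] x by simp
      qed
      ultimately show ?thesis using av231_cong by blast
    qed
    ultimately have "q \<in> Aset N" using qperm unfolding Aset_def by simp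
    then show "p \<in> ?R" using pq unfolding t_def by blast
  qed
  show ?thesis
  proof
    show "?L \<subseteq> ?R" using key2 by blast
    show "?R \<subseteq> ?L" using key unfolding t_def by blast
  qed
qed

lemma S2_inj: "inj_on (\<lambda>q. Transposition.transpose a b \<circ> q) X"
proof (rule inj_onI)
  fix x y assume "Transposition.transpose a b \<circ> x = Transposition.transpose a b \<circ> y"
  then have "Transposition.transpose a b \<circ> (Transposition.transpose a b \<circ> x) = Transposition.transpose a b \<circ> (Transposition.transpose a b \<circ> y)" by simp
  then show "x = y" by (simp add: o_assoc)
qed

lemma S3_eq: assumes "n \<ge> 2" shows "{p \<in> Aset n. p 1 = n} = Q n ` {1..n div 2}"
proof
  show "{p \<in> Aset n. p 1 = n} \<subseteq> Q n ` {1..n div 2}"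
  proof
    fix p assume "p \<in> {p \<in> Aset n. p 1 = n}"
    then have "p permutes {1..n}" "av231 p n" "av231 (p \<circ> p) n" "p 1 = n" by (auto simp: Aset_def)
    then obtain m where m: "1 \<le> m" "2 * m \<le> n" "p = Q n m" using S3_char[OF assms] by blast
    then have "m \<in> {1..n div 2}" by auto
    then show "p \<in> Q n ` {1..n div 2}" using m by blast
  qed
  show "Q n ` {1..n div 2} \<subseteq> {p \<in> Aset n. p 1 = n}"
  proof
    fix p assume "p \<in> Q n ` {1..n div 2}"
    then obtain m where m: "m \<in> {1..n div 2}" "p = Q n m" by auto
    then have "1 \<le> m" "2 * m \<le> n" by auto
    then show "p \<in> {p \<in> Aset n. p 1 = n}" using Q_in_A Q_1 m by auto
  qed
qed

lemma finite_A: "finite (Aset n)"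
proof (rule finite_subset[of _ "{p. p permutes {1..n}}"])
  show "Aset n \<subseteq> {p. p permutes {1..n}}" by (auto simp: Aset_def)
  show "finite {p. p permutes {1..n}}" by (rule finite_permutations) simp
qed

lemma recur:
  assumes N: "N \<ge> 1"
  shows "card (Aset (Suc (Suc N))) = card (Aset (Suc N)) + card (Aset N) + Suc (Suc N) div 2"
proof -
  define n where "n = Suc (Suc N)"
  define S1 where "S1 = {p \<in> Aset n. p n = n}"
  define S2 where "S2 = {p \<in> Aset n. p (Suc N) = n \<and> p n = Suc N}"
  define S3 where "S3 = {p \<in> Aset n. p 1 = n}"
  have e1: "S1 = Aset (Suc N)" unfolding S1_def n_def by (rule S1_eq[symmetric])
  have e2: "S2 = (\<lambda>q. Transposition.transpose (Suc N) (Suc (Suc N)) \<circ> q) ` Aset N"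
    unfolding S2_def n_def by (rule S2_eq)
  have e3: "S3 = Q n ` {1..n div 2}" unfolding S3_def by (rule S3_eq) (simp add: n_def)
  have cover: "Aset n = S1 \<union> S2 \<union> S3"
  proof
    show "S1 \<union> S2 \<union> S3 \<subseteq> Aset n" unfolding S1_def S2_def S3_def by auto
    show "Aset n \<subseteq> S1 \<union> S2 \<union> S3"
    proof
      fix p assume pA: "p \<in> Aset n"
      then have perm: "p permutes {1..n}" and a: "av231 p n" "av1432 p n" "av231 (p \<circ> p) n"
        by (auto simp: Aset_def)
      have "n \<in> p ` {1..n}" using permutes_image[OF perm] by (simp add: n_def)
      then obtain k where k: "1 \<le> k" "k \<le> n" "p k = n" by auto
      consider "k = n" | "k = 1" | "1 < k \<and> k < n" using k by linarith
      then show "p \<in> S1 \<union> S2 \<union> S3"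
      proof cases
        case 1 then show ?thesis using pA k unfolding S1_def by auto
      next
        case 2 then show ?thesis using pA k unfolding S3_def by auto
      next
        case 3
        have "n \<ge> 3" using N n_def by simp
        then have "k = n - 1 \<and> p n = n - 1" using P1[OF _ perm a(1) a(2) a(3)] 3 k by blast
        then show ?thesis using pA k unfolding S2_def n_def by auto
      qed
    qed
  qed
  have injE: "\<And>p x y. p \<in> Aset n \<Longrightarrow> p x = p y \<Longrightarrow> x = y"
    using permutes_inj by (auto simp: Aset_def inj_def)
  have d12: "S1 \<inter> S2 = {}" unfolding S1_def S2_def n_def by auto
  have d3: "(S1 \<union> S2) \<inter> S3 = {}"
  proof -
    have "S1 \<inter> S3 = {}"
    proof (rule ccontr)
      assume "S1 \<inter> S3 \<noteq> {}"
      then obtain p where "p \<in> Aset n" "p n = n" "p 1 = n" unfolding S1_def S3_def by auto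
      then have "n = 1" using injE[of p n 1] by simp
      then show False by (simp add: n_def)
    qed
    moreover have "S2 \<inter> S3 = {}"
    proof (rule ccontr)
      assume "S2 \<inter> S3 \<noteq> {}"
      then obtain p where "p \<in> Aset n" "p (Suc N) = n" "p 1 = n" unfolding S2_def S3_def by auto
      then have "Suc N = 1" using injE[of p "Suc N" 1] by simp
      then show False using N by simp
    qed
    ultimately show ?thesis by auto
  qed
  have fin: "finite S1" "finite S2" "finite S3"
    unfolding S1_def S2_def S3_def using finite_A[of n] by auto
  have "card (Aset n) = card S1 + card S2 + card S3"
    using cover card_Un_disjoint[of "S1 \<union> S2" S3] card_Un_disjoint[of S1 S2] fin d12 d3 by simp
  moreover have "card S2 = card (Aset N)" unfolding e2 by (rule card_image[OF S2_inj])
  moreover have "card S3 = n div 2" unfolding e3 using card_image[OF Q_inj] by simp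
  ultimately show ?thesis using e1 n_def by simp
qed

lemma small_A: assumes "n \<le> 2" shows "Aset n = {p. p permutes {1..n}}"
proof -
  have "av231 p n" "av1432 p n" for p :: "nat \<Rightarrow> nat"
    unfolding av231_def av1432_def using assms by auto
  then show ?thesis unfolding Aset_def by auto
qed

lemma card_A1: "card (Aset 1) = 1"
  using small_A[of 1] card_permutations[of "{1..1::nat}" 1] by simp

lemma card_A2: "card (Aset 2) = 2"
  using small_A[of 2] card_permutations[of "{1..2::nat}" 2] by simp

lemma closed_form:
  "int (card (Aset (Suc N))) = int (lucas (N + 2)) - int ((N + 2) div 2) - 1 \<and>
   int (card (Aset (Suc (Suc N)))) = int (lucas (N + 3)) - int ((N + 3) div 2) - 1"
proof (induction N)
  case 0
  have "lucas 2 = 3" "lucas 3 = 4" by (simp_all add: numeral_eq_Suc)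
  moreover have "card (Aset (Suc (Suc 0))) = 2" using card_A2 by (simp add: numeral_2_eq_2)
  ultimately show ?case using card_A1 by simp
next
  case (Suc N)
  have r: "card (Aset (Suc (Suc (Suc N)))) = card (Aset (Suc (Suc N))) + card (Aset (Suc N)) + Suc (Suc (Suc N)) div 2"
    using recur[of "Suc N"] by simp
  have l: "lucas (Suc N + 3) = lucas (N + 3) + lucas (N + 2)" by (simp add: numeral_eq_Suc)
  have d0: "(Suc N + 3) div 2 = (N + 2) div 2 + 1" by presburger
  have d: "int ((Suc N + 3) div 2) = int ((N + 2) div 2) + 1" unfolding d0 by simp
  have d2: "int ((Suc N + 2) div 2) = int ((N + 3) div 2)" by (simp add: numeral_eq_Suc)
  show ?case
  proof
    show "int (card (Aset (Suc (Suc N)))) = int (lucas (Suc N + 2)) - int ((Suc N + 2) div 2) - 1"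
      using Suc.IH by (simp add: numeral_eq_Suc)
    show "int (card (Aset (Suc (Suc (Suc N))))) = int (lucas (Suc N + 3)) - int ((Suc N + 3) div 2) - 1"
      using Suc.IH r l d by (simp add: numeral_eq_Suc)
  qed
qed

definition rho :: "nat \<Rightarrow> nat \<Rightarrow> nat" where
  "rho n = (\<lambda>i. if 1 \<le> i \<and> i \<le> n then n + 1 - i else i)"

definition rc :: "nat \<Rightarrow> (nat \<Rightarrow> nat) \<Rightarrow> nat \<Rightarrow> nat" where
  "rc n p = rho n \<circ> p \<circ> rho n"

definition Bset :: "nat \<Rightarrow> (nat \<Rightarrow> nat) set" where
  "Bset n = {p. p permutes {1..n} \<and> av312 p n \<and> av3214 p n \<and> av312 (p \<circ> p) n}"

lemma rho_rho: "rho n \<circ> rho n = id"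
  by (rule ext) (auto simp: rho_def)

lemma rho_rho': "rho n \<circ> (rho n \<circ> f) = f"
  by (simp add: o_assoc rho_rho)

lemma rho_rho'': "f \<circ> rho n \<circ> rho n = f"
  by (rule ext) (auto simp: rho_def)

lemma rho_perm: "rho n permutes {1..n}"
proof (rule inj_imp_permutes)
  show "inj_on (rho n) {1..n}" by (auto simp: inj_on_def rho_def)
  show "\<And>x. x \<in> {1..n} \<Longrightarrow> rho n x \<in> {1..n}" by (auto simp: rho_def)
  show "\<And>x. x \<notin> {1..n} \<Longrightarrow> rho n x = x" by (auto simp: rho_def)
qed simp

lemma rc_perm: "p permutes {1..n} \<Longrightarrow> rc n p permutes {1..n}"
  unfolding rc_def by (intro permutes_compose rho_perm) auto

lemma rc_rc: "rc n (rc n p) = p"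
  unfolding rc_def by (simp add: o_assoc rho_rho rho_rho'')

lemma rc_sq: "rc n p \<circ> rc n p = rc n (p \<circ> p)"
  unfolding rc_def by (simp add: o_assoc rho_rho rho_rho'')

lemma rc_val: assumes "p permutes {1..n}" "1 \<le> x" "x \<le> n"
  shows "rc n p x = n + 1 - p (n + 1 - x)"
proof -
  have "1 \<le> p (n + 1 - x) \<and> p (n + 1 - x) \<le> n" using perm_range[OF assms(1), of "n + 1 - x"] assms by auto
  then show ?thesis using assms by (simp add: rc_def rho_def)
qed

lemma rc_add: assumes "p permutes {1..n}" "1 \<le> x" "x \<le> n" "x + y = n + 1"
  shows "rc n p x + p y = n + 1"
proof -
  have y: "y = n + 1 - x" using assms by arith
  have "1 \<le> p (n + 1 - x) \<and> p (n + 1 - x) \<le> n" using perm_range[OF assms(1), of "n + 1 - x"] assms by auto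
  then show ?thesis using assms y by (simp add: rc_def rho_def)
qed

lemma mirror: "1 \<le> (x::nat) \<Longrightarrow> x \<le> n \<Longrightarrow> \<exists>y. x + y = n + 1 \<and> 1 \<le> y \<and> y \<le> n"
  by (rule exI[of _ "n + 1 - x"]) auto

lemma rc_av312: assumes perm: "p permutes {1..n}" shows "av312 (rc n p) n \<longleftrightarrow> av231 p n"
proof -
  have R: "\<And>x y. 1 \<le> x \<Longrightarrow> x \<le> n \<Longrightarrow> x + y = n + 1 \<Longrightarrow> rc n p x + p y = n + 1" using rc_add[OF perm] by blast
  show ?thesis
  proof
    assume H: "av312 (rc n p) n"
    show "av231 p n" unfolding av231_def
    proof (intro allI impI notI)
      fix a b c assume h: "1 \<le> a" "a < b" "b < c" "c \<le> n" "p c < p a \<and> p a < p b"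
      obtain a' where a': "a + a' = n + 1" "1 \<le> a'" "a' \<le> n" using mirror[of a n] h by auto
      obtain b' where b': "b + b' = n + 1" "1 \<le> b'" "b' \<le> n" using mirror[of b n] h by auto
      obtain c' where c': "c + c' = n + 1" "1 \<le> c'" "c' \<le> n" using mirror[of c n] h by auto
      have v: "rc n p a' + p a = n + 1" "rc n p b' + p b = n + 1" "rc n p c' + p c = n + 1"
        using R[of a' a] R[of b' b] R[of c' c] a' b' c' by auto
      have o: "1 \<le> c'" "c' < b'" "b' < a'" "a' \<le> n" using h a' b' c' by linarith+
      show False using H[unfolded av312_def, rule_format, OF o] v h by linarith
    qed
  next
    assume H: "av231 p n"
    show "av312 (rc n p) n" unfolding av312_def
    proof (intro allI impI notI)
      fix a b c assume h: "1 \<le> a" "a < b" "b < c" "c \<le> n" "rc n p b < rc n p c \<and> rc n p c < rc n p a"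
      obtain a' where a': "a + a' = n + 1" "1 \<le> a'" "a' \<le> n" using mirror[of a n] h by auto
      obtain b' where b': "b + b' = n + 1" "1 \<le> b'" "b' \<le> n" using mirror[of b n] h by auto
      obtain c' where c': "c + c' = n + 1" "1 \<le> c'" "c' \<le> n" using mirror[of c n] h by auto
      have v: "rc n p a + p a' = n + 1" "rc n p b + p b' = n + 1" "rc n p c + p c' = n + 1"
        using R[of a a'] R[of b b'] R[of c c'] a' b' c' h by auto
      have o: "1 \<le> c'" "c' < b'" "b' < a'" "a' \<le> n" using h a' b' c' by linarith+
      show False using H[unfolded av231_def, rule_format, OF o] v h by linarith
    qed
  qed
qed

lemma rc_av3214: assumes perm: "p permutes {1..n}" shows "av3214 (rc n p) n \<longleftrightarrow> av1432 p n"
proof -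
  have R: "\<And>x y. 1 \<le> x \<Longrightarrow> x \<le> n \<Longrightarrow> x + y = n + 1 \<Longrightarrow> rc n p x + p y = n + 1" using rc_add[OF perm] by blast
  show ?thesis
  proof
    assume H: "av3214 (rc n p) n"
    show "av1432 p n" unfolding av1432_def
    proof (intro allI impI notI)
      fix a b c d assume h: "1 \<le> a" "a < b" "b < c" "c < d" "d \<le> n" "p a < p d \<and> p d < p c \<and> p c < p b"
      obtain a' where a': "a + a' = n + 1" "1 \<le> a'" "a' \<le> n" using mirror[of a n] h by auto
      obtain b' where b': "b + b' = n + 1" "1 \<le> b'" "b' \<le> n" using mirror[of b n] h by auto
      obtain c' where c': "c + c' = n + 1" "1 \<le> c'" "c' \<le> n" using mirror[of c n] h by auto
      obtain d' where d': "d + d' = n + 1" "1 \<le> d'" "d' \<le> n" using mirror[of d n] h by auto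
      have v: "rc n p a' + p a = n + 1" "rc n p b' + p b = n + 1" "rc n p c' + p c = n + 1" "rc n p d' + p d = n + 1"
        using R[of a' a] R[of b' b] R[of c' c] R[of d' d] a' b' c' d' by auto
      have o: "1 \<le> d'" "d' < c'" "c' < b'" "b' < a'" "a' \<le> n" using h a' b' c' d' by linarith+
      show False using H[unfolded av3214_def, rule_format, OF o] v h by linarith
    qed
  next
    assume H: "av1432 p n"
    show "av3214 (rc n p) n" unfolding av3214_def
    proof (intro allI impI notI)
      fix a b c d assume h: "1 \<le> a" "a < b" "b < c" "c < d" "d \<le> n" "rc n p c < rc n p b \<and> rc n p b < rc n p a \<and> rc n p a < rc n p d"
      obtain a' where a': "a + a' = n + 1" "1 \<le> a'" "a' \<le> n" using mirror[of a n] h by auto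
      obtain b' where b': "b + b' = n + 1" "1 \<le> b'" "b' \<le> n" using mirror[of b n] h by auto
      obtain c' where c': "c + c' = n + 1" "1 \<le> c'" "c' \<le> n" using mirror[of c n] h by auto
      obtain d' where d': "d + d' = n + 1" "1 \<le> d'" "d' \<le> n" using mirror[of d n] h by auto
      have v: "rc n p a + p a' = n + 1" "rc n p b + p b' = n + 1" "rc n p c + p c' = n + 1" "rc n p d + p d' = n + 1"
        using R[of a a'] R[of b b'] R[of c c'] R[of d d'] a' b' c' d' h by auto
      have o: "1 \<le> d'" "d' < c'" "c' < b'" "b' < a'" "a' \<le> n" using h a' b' c' d' by linarith+
      show False using H[unfolded av1432_def, rule_format, OF o] v h by linarith
    qed
  qed
qed

lemma rc_in_B: assumes "p \<in> Aset n" shows "rc n p \<in> Bset n"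
proof -
  have perm: "p permutes {1..n}" and a: "av231 p n" "av1432 p n" "av231 (p \<circ> p) n" using assms by (auto simp: Aset_def)
  have pp: "(p \<circ> p) permutes {1..n}" by (rule permutes_compose[OF perm perm])
  show ?thesis unfolding Bset_def using rc_perm[OF perm] rc_av312[OF perm] rc_av3214[OF perm] rc_av312[OF pp] a rc_sq
    by simp
qed

lemma rc_in_A: assumes "q \<in> Bset n" shows "rc n q \<in> Aset n"
proof -
  have perm: "q permutes {1..n}" and a: "av312 q n" "av3214 q n" "av312 (q \<circ> q) n" using assms by (auto simp: Bset_def)
  have perm': "rc n q permutes {1..n}" by (rule rc_perm[OF perm])
  have pp: "(rc n q \<circ> rc n q) permutes {1..n}" by (rule permutes_compose[OF perm' perm'])
  have "av231 (rc n q) n" using rc_av312[OF perm'] a rc_rc by simp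
  moreover have "av1432 (rc n q) n" using rc_av3214[OF perm'] a rc_rc by simp
  moreover have "av231 (rc n q \<circ> rc n q) n" using rc_av312[OF pp] a rc_sq rc_rc by simp
  ultimately show ?thesis using perm' by (simp add: Aset_def)
qed

lemma card_B: "card (Bset n) = card (Aset n)"
proof -
  have "bij_betw (rc n) (Aset n) (Bset n)"
    by (rule bij_betw_byWitness[where f' = "rc n"]) (auto simp: rc_rc rc_in_A rc_in_B)
  then show ?thesis by (simp add: bij_betw_same_card)
qed

lemma cA: "c_count n [2,3,1] [1,4,3,2] [2,3,1] = card (Aset n)"
proof -
  have "{p. p permutes {1..n} \<and> avoids p n [2,3,1] \<and> avoids p n [1,4,3,2] \<and> avoids (p \<circ> p) n [2,3,1]} = Aset n"
  proof (rule set_eqI)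
    fix p
    show "p \<in> {p. p permutes {1..n} \<and> avoids p n [2,3,1] \<and> avoids p n [1,4,3,2] \<and> avoids (p \<circ> p) n [2,3,1]} \<longleftrightarrow> p \<in> Aset n"
    proof (cases "p permutes {1..n}")
      case True
      have i1: "inj_on p {1..n}" using permutes_inj[OF True] by (auto simp: inj_def inj_on_def)
      have i2: "inj_on (p \<circ> p) {1..n}" using permutes_inj[OF permutes_compose[OF True True]] by (auto simp: inj_def inj_on_def)
      show ?thesis using True avoids231[OF i1] avoids1432[OF i1] avoids231[OF i2] by (simp add: Aset_def)
    next
      case False then show ?thesis by (simp add: Aset_def)
    qed
  qed
  then show ?thesis unfolding c_count_def by simp
qed

lemma cB: "c_count n [3,1,2] [3,2,1,4] [3,1,2] = card (Bset n)"
proof -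
  have "{p. p permutes {1..n} \<and> avoids p n [3,1,2] \<and> avoids p n [3,2,1,4] \<and> avoids (p \<circ> p) n [3,1,2]} = Bset n"
  proof (rule set_eqI)
    fix p
    show "p \<in> {p. p permutes {1..n} \<and> avoids p n [3,1,2] \<and> avoids p n [3,2,1,4] \<and> avoids (p \<circ> p) n [3,1,2]} \<longleftrightarrow> p \<in> Bset n"
    proof (cases "p permutes {1..n}")
      case True
      have i1: "inj_on p {1..n}" using permutes_inj[OF True] by (auto simp: inj_def inj_on_def)
      have i2: "inj_on (p \<circ> p) {1..n}" using permutes_inj[OF permutes_compose[OF True True]] by (auto simp: inj_def inj_on_def)
      show ?thesis using True avoids312[OF i1] avoids3214[OF i1] avoids312[OF i2] by (simp add: Bset_def)
    next
      case False then show ?thesis by (simp add: Bset_def)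
    qed
  qed
  then show ?thesis unfolding c_count_def by simp
qed

lemma ceil_half: "ceiling (real n / 2) = int ((n + 1) div 2)"
proof (cases "even n")
  case True
  then obtain j where j: "n = 2 * j" by (auto elim: evenE)
  then have "real n / 2 = of_int (int j)" by simp
  moreover have "(n + 1) div 2 = j" using j by presburger
  ultimately show ?thesis by simp
next
  case False
  then obtain j where j: "n = 2 * j + 1" by (auto elim: oddE)
  have "(n + 1) div 2 = j + 1" using j by presburger
  moreover have "ceiling (real n / 2) = int j + 1"
  proof (rule ceiling_unique)
    show "of_int (int j + 1) - 1 < real n / 2" using j by simp
    show "real n / 2 \<le> of_int (int j + 1)" using j by simp
  qed
  ultimately show ?thesis by simp
qed

theorem theorem4p1:
  fixes n :: nat
  assumes "n \<ge> 1"
  shows "int (c_count n [2,3,1] [1,4,3,2] [2,3,1]) = int (c_count n [3,1,2] [3,2,1,4] [3,1,2])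
       \<and> int (c_count n [3,1,2] [3,2,1,4] [3,1,2]) = int (lucas (n + 1)) - ceiling (real n / 2) - 1"
proof -
  obtain N where N: "n = Suc N" using assms by (cases n) auto
  have "int (card (Aset n)) = int (lucas (n + 1)) - int ((n + 1) div 2) - 1"
    using closed_form[of N] N by (simp add: add.commute)
  then show ?thesis using cA cB card_B ceil_half by simp
qed

end
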